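(* The number of transversals in any symmetric latin square of order $n$ is congruent to $n$ modulo $2$.
   Context: A latin square $L=[l_{ij}]$ of order $n$ is an $n\times n$ array of $n$ symbols in which each symbol occurs exactly once in each row and column; it is symmetric if $l_{ij}=l_{ji}$ for all $i,j$. A transversal is a set of $n$ cells, one from each row and one from each column, no two containing the same symbol. *)

theory Defs
  imports Main
begin

text \<open>An n x n array with rows/columns indexed by 0..n-1, entries of type 'a.
  It is a latin square of order n if it uses exactly n symbols and each symbol
  occurs exactly once in each row and column (equivalently: rows and columns
  are injective and the symbol set has n elements).\<close>
definition latin_square :: "nat \<Rightarrow> (nat \<Rightarrow> nat \<Rightarrow> 'a) \<Rightarrow> bool" where
  "latin_square n L \<longleftrightarrow>
     card {L i j | i j. i < n \<and> j < n} = n \<and>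
     (\<forall>i<n. inj_on (\<lambda>j. L i j) {0..<n}) \<and>
     (\<forall>j<n. inj_on (\<lambda>i. L i j) {0..<n})"

definition symmetric_square :: "nat \<Rightarrow> (nat \<Rightarrow> nat \<Rightarrow> 'a) \<Rightarrow> bool" where
  "symmetric_square n L \<longleftrightarrow> (\<forall>i<n. \<forall>j<n. L i j = L j i)"

definition transversal :: "nat \<Rightarrow> (nat \<Rightarrow> nat \<Rightarrow> 'a) \<Rightarrow> (nat \<times> nat) set \<Rightarrow> bool" where
  "transversal n L T \<longleftrightarrow>
     T \<subseteq> {0..<n} \<times> {0..<n} \<and>
     (\<forall>i<n. \<exists>!j. (i, j) \<in> T) \<and>
     (\<forall>j<n. \<exists>!i. (i, j) \<in> T) \<and>
     inj_on (\<lambda>(i, j). L i j) T"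

end

theory Submission
  imports Defs
begin

lemma inv_parity:
  assumes "finite S" "\<forall>x\<in>S. f x \<in> S \<and> f (f x) = x"
  shows "card S mod 2 = card {x\<in>S. f x = x} mod 2"
  using assms
proof (induction "card S" arbitrary: S rule: less_induct)
  case less
  show ?case
  proof (cases "\<exists>x\<in>S. f x \<noteq> x")
    case False
    then have "{x\<in>S. f x = x} = S" by auto
    then show ?thesis by simp
  next
    case True
    then obtain x where x: "x \<in> S" "f x \<noteq> x" by blast
    define S' where "S' = S - {x, f x}"
    have fx: "f x \<in> S" using less x by auto
    have c: "card S = card S' + 2"
    proof -
      have "{x, f x} \<subseteq> S" using x fx by simp
      moreover have "card {x, f x} = 2" using x by simp
      ultimately show ?thesis unfolding S'_def
        using less(2) card_Diff_subset[of "{x, f x}" S] card_mono[of S "{x, f x}"] by simp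
    qed
    have inv': "\<forall>y\<in>S'. f y \<in> S' \<and> f (f y) = y"
      proof
      fix y assume y: "y \<in> S'"
      then have yS: "y \<in> S" "y \<noteq> x" "y \<noteq> f x" unfolding S'_def by auto
      have "f y \<noteq> x" using yS less(3) x by metis
      moreover have "f y \<noteq> f x" using yS less(3) x fx by metis
      ultimately show "f y \<in> S' \<and> f (f y) = y" using yS less(3) unfolding S'_def by auto
    qed
    have fin': "finite S'" using less(2) unfolding S'_def by simp
    have IH: "card S' mod 2 = card {y\<in>S'. f y = y} mod 2"
      using less(1)[OF _ fin' inv'] c by simp
    have "{y\<in>S'. f y = y} = {y\<in>S. f y = y}"
      using x less(3) unfolding S'_def by auto
    then show ?thesis using IH c by simp
  qed
qed


lemma mem_sw: "(a,b) \<in> (\<lambda>(i,j). (j,i)) ` T \<longleftrightarrow> (b,a) \<in> T"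
  by force

lemma sw_sw: "(\<lambda>(i,j). (j,i)) ` ((\<lambda>(i,j). (j::nat,i::nat)) ` T) = T"
  by (auto simp: image_iff)

lemma transversal_sw:
  assumes "symmetric_square n L" "transversal n L T"
  shows "transversal n L ((\<lambda>(i,j). (j,i)) ` T)"
proof -
  have sub: "T \<subseteq> {0..<n} \<times> {0..<n}" using assms(2) unfolding transversal_def by blast
  show ?thesis
    unfolding transversal_def
  proof (intro conjI)
    show "(\<lambda>(i,j). (j,i)) ` T \<subseteq> {0..<n} \<times> {0..<n}" using sub by auto
    show "\<forall>i<n. \<exists>!j. (i, j) \<in> (\<lambda>(i,j). (j,i)) ` T"
      using assms(2) unfolding transversal_def mem_sw by blast
    show "\<forall>j<n. \<exists>!i. (i, j) \<in> (\<lambda>(i,j). (j,i)) ` T"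
      using assms(2) unfolding transversal_def mem_sw by blast
    show "inj_on (\<lambda>(i, j). L i j) ((\<lambda>(i,j). (j,i)) ` T)"
    proof (rule inj_onI)
      fix p q assume pm: "p \<in> (\<lambda>(i,j). (j,i)) ` T" and qm: "q \<in> (\<lambda>(i,j). (j,i)) ` T"
        and pq: "(case p of (i,j) \<Rightarrow> L i j) = (case q of (i,j) \<Rightarrow> L i j)"
      obtain a b where p: "p = (a,b)" by (cases p)
      obtain c d where q: "q = (c,d)" by (cases q)
      have m: "(a,b) \<in> (\<lambda>(i,j). (j,i)) ` T" "(c,d) \<in> (\<lambda>(i,j). (j,i)) ` T" using pm qm p q by auto
      have e: "L a b = L c d" using pq p q by simp
      have t: "(b,a) \<in> T" "(d,c) \<in> T" using m mem_sw by auto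
      have b: "b<n" "a<n" "d<n" "c<n" using t sub by auto
      have "L b a = L a b" "L d c = L c d" using b assms(1) unfolding symmetric_square_def by auto
      then have "L b a = L d c" using e by simp
      then have "(b,a) = (d,c)" using t assms(2) unfolding transversal_def inj_on_def by auto
      then show "p = q" using p q by simp
    qed
  qed
qed

lemma fixed_transversal:
  assumes "symmetric_square n L" "transversal n L T" "(\<lambda>(i,j). (j,i)) ` T = T"
  shows "T = (\<lambda>i. (i,i)) ` {0..<n}"
proof -
  have sub: "T \<subseteq> {0..<n} \<times> {0..<n}" using assms(2) unfolding transversal_def by blast
  have diag: "i = j" if "(i,j) \<in> T" for i j
  proof -
    have "(j,i) \<in> T" using that assms(3) mem_sw by metis
    moreover have "L i j = L j i" using that sub assms(1) unfolding symmetric_square_def by auto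
    ultimately show ?thesis using that assms(2) unfolding transversal_def inj_on_def by auto
  qed
  show ?thesis
  proof
    show "T \<subseteq> (\<lambda>i. (i,i)) ` {0..<n}"
    proof
      fix p assume "p \<in> T"
      then obtain i j where p: "p = (i,j)" "(i,j) \<in> T" by (cases p) auto
      then show "p \<in> (\<lambda>i. (i,i)) ` {0..<n}" using diag sub by auto
    qed
    show "(\<lambda>i. (i,i)) ` {0..<n} \<subseteq> T"
    proof
      fix p assume "p \<in> (\<lambda>i. (i,i)) ` {0..<n}"
      then obtain i where i: "p = (i,i)" "i < n" by auto
      then obtain j where "(i,j) \<in> T" using assms(2) unfolding transversal_def by blast
      then show "p \<in> T" using diag i by auto
    qed
  qed
qed

lemma diag_transversal_iff:
  "transversal n L ((\<lambda>i. (i,i)) ` {0..<n}) \<longleftrightarrow> inj_on (\<lambda>i. L i i) {0..<n}"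
proof -
  have "inj_on (\<lambda>(i, j). L i j) ((\<lambda>i. (i,i)) ` {0..<n}) \<longleftrightarrow> inj_on (\<lambda>i. L i i) {0..<n}"
    unfolding inj_on_def by auto
  moreover have "(\<lambda>i. (i,i)) ` {0..<n} \<subseteq> {0..<n} \<times> {0..<n}" by auto
  moreover have "\<forall>i<n. \<exists>!j. (i, j) \<in> (\<lambda>i. (i,i)) ` {0..<n}" by force
  moreover have "\<forall>j<n. \<exists>!i. (i, j) \<in> (\<lambda>i. (i,i)) ` {0..<n}" by force
  ultimately show ?thesis unfolding transversal_def by blast
qed

lemma diag_count_parity:
  assumes n: "n \<ge> 1" and lat: "latin_square n L" and sym: "symmetric_square n L"
    and s: "s \<in> {L i j | i j. i < n \<and> j < n}"
  shows "card {i. i < n \<and> L i i = s} mod 2 = n mod 2"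
proof -
  define Sym where "Sym = {L i j | i j. i < n \<and> j < n}"
  have cS: "card Sym = n" using lat unfolding latin_square_def Sym_def by blast
  have finS: "finite Sym" using cS n card.infinite by force
  have row: "\<exists>j<n. L i j = s" if i: "i < n" for i
  proof -
    have inj: "inj_on (\<lambda>j. L i j) {0..<n}" using lat i unfolding latin_square_def by blast
    have sub: "(\<lambda>j. L i j) ` {0..<n} \<subseteq> Sym" unfolding Sym_def using i by (auto intro!: exI)
    have "card ((\<lambda>j. L i j) ` {0..<n}) = n" using card_image[OF inj] by simp
    then have "(\<lambda>j. L i j) ` {0..<n} = Sym" using card_subset_eq[OF finS sub] cS by simp
    then show ?thesis using s unfolding Sym_def[symmetric] by force
  qed
  define C where "C = {(i,j). i < n \<and> j < n \<and> L i j = s}"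
  have C_Sigma: "C = Sigma {0..<n} (\<lambda>i. {j. j < n \<and> L i j = s})" unfolding C_def by auto
  have one: "card {j. j < n \<and> L i j = s} = 1" if i: "i \<in> {0..<n}" for i
  proof -
    obtain j where j: "j < n" "L i j = s" using row i by auto
    have inj: "inj_on (\<lambda>j. L i j) {0..<n}" using lat i unfolding latin_square_def by auto
    have "{j. j < n \<and> L i j = s} = {j}" using j inj unfolding inj_on_def by auto
    then show ?thesis by simp
  qed
  have cC: "card C = n" unfolding C_Sigma
    by (subst card_SigmaI) (auto simp: one)
  define A where "A = {i. i < n \<and> L i i = s}"
  define Dg where "Dg = (\<lambda>i. (i,i)) ` A"
  define Off where "Off = {(i,j). i < n \<and> j < n \<and> L i j = s \<and> i \<noteq> j}"
  have CU: "C = Dg \<union> Off" unfolding C_def Dg_def Off_def A_def by auto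
  have disj: "Dg \<inter> Off = {}" unfolding Dg_def Off_def by auto
  have finOff: "finite Off"
    by (rule finite_subset[of _ "{0..<n} \<times> {0..<n}"]) (auto simp: Off_def)
  have finA: "finite A" unfolding A_def by simp
  have cDg: "card Dg = card A" unfolding Dg_def by (rule card_image) (auto simp: inj_on_def)
  have "card Off mod 2 = card {x\<in>Off. (\<lambda>(i,j). (j,i)) x = x} mod 2"
    by (rule inv_parity[OF finOff]) (use sym in \<open>auto simp: Off_def symmetric_square_def\<close>)
  moreover have "{x\<in>Off. (\<lambda>(i,j). (j,i)) x = x} = {}" unfolding Off_def by auto
  ultimately have ev: "card Off mod 2 = 0" by simp
  have "card C = card Dg + card Off"
    unfolding CU by (rule card_Un_disjoint) (use finA finOff disj in \<open>auto simp: Dg_def\<close>)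
  then have nA: "n = card A + card Off" using cC cDg by simp
  obtain k where "card Off = 2 * k" using ev by (metis mult_div_mod_eq add_0_right)
  then have "n = card A + 2 * k" using nA by simp
  then have "n mod 2 = card A mod 2" by simp
  then show ?thesis unfolding A_def by simp
qed

lemma diag_inj_iff:
  assumes n: "n \<ge> 1" and lat: "latin_square n L" and sym: "symmetric_square n L"
  shows "inj_on (\<lambda>i. L i i) {0..<n} \<longleftrightarrow> odd n"
proof
  assume inj: "inj_on (\<lambda>i. L i i) {0..<n}"
  show "odd n"
  proof (rule ccontr)
    assume "\<not> odd n"
    then have ev: "n mod 2 = 0" by simp
    have s: "L 0 0 \<in> {L i j | i j. i < n \<and> j < n}" using n by force
    define A where "A = {i. i < n \<and> L i i = L 0 0}"
    have "card A mod 2 = 0" using diag_count_parity[OF n lat sym s] ev unfolding A_def by simp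
    moreover have "0 \<in> A" using n unfolding A_def by simp
    moreover have "finite A" unfolding A_def by simp
    ultimately have "card A \<ge> 2"
      by (metis card_0_eq empty_iff le_less_linear less_2_cases mod_less numeral_One one_neq_zero)
    moreover have "card A \<le> 1"
      using inj \<open>finite A\<close> card_le_Suc0_iff_eq[of A] unfolding A_def inj_on_def by auto
    ultimately show False by simp
  qed
next
  assume odd: "odd n"
  define Sym where "Sym = {L i j | i j. i < n \<and> j < n}"
  have cS: "card Sym = n" using lat unfolding latin_square_def Sym_def by blast
  have finS: "finite Sym" using cS n card.infinite by force
  have "Sym \<subseteq> (\<lambda>i. L i i) ` {0..<n}"
  proof
    fix s assume s: "s \<in> Sym"
    have "card {i. i < n \<and> L i i = s} mod 2 = 1"
      using diag_count_parity[OF n lat sym s[unfolded Sym_def]] odd by presburger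
    then have "{i. i < n \<and> L i i = s} \<noteq> {}" by (metis card.empty mod_0 zero_neq_one)
    then show "s \<in> (\<lambda>i. L i i) ` {0..<n}" by auto
  qed
  moreover have "(\<lambda>i. L i i) ` {0..<n} \<subseteq> Sym" unfolding Sym_def by (auto intro!: exI)
  ultimately have "(\<lambda>i. L i i) ` {0..<n} = Sym" by blast
  then have "card ((\<lambda>i. L i i) ` {0..<n}) = card {0..<n}" using cS by simp
  then show "inj_on (\<lambda>i. L i i) {0..<n}" using inj_on_iff_eq_card[of "{0..<n}" "\<lambda>i. L i i"] by simp
qed

theorem theorem4p5:
  fixes L :: "nat \<Rightarrow> nat \<Rightarrow> 'a" and n :: nat
  assumes "n \<ge> 1"
    and "latin_square n L"
    and "symmetric_square n L"
  shows "card {T. transversal n L T} mod 2 = n mod 2"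
proof -
  define S where "S = {T. transversal n L T}"
  define f where "f = (\<lambda>T. (\<lambda>(i,j). (j::nat,i::nat)) ` T)"
  define D where "D = (\<lambda>i. (i::nat,i)) ` {0..<n}"
  have finS: "finite S"
  proof (rule finite_subset[of _ "Pow ({0..<n} \<times> {0..<n})"])
    show "S \<subseteq> Pow ({0..<n} \<times> {0..<n})"
    proof
      fix T assume "T \<in> S"
      then have "T \<subseteq> {0..<n} \<times> {0..<n}" unfolding S_def transversal_def by blast
      then show "T \<in> Pow ({0..<n} \<times> {0..<n})" by simp
    qed
  qed simp
  have "card S mod 2 = card {T\<in>S. f T = T} mod 2"
  proof (rule inv_parity[OF finS], rule ballI)
    fix T assume "T \<in> S"
    then have "transversal n L T" unfolding S_def by simp
    then show "f T \<in> S \<and> f (f T) = T"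
      unfolding S_def f_def using transversal_sw[OF assms(3)] sw_sw[of T] by simp
  qed
  moreover have "{T\<in>S. f T = T} = (if transversal n L D then {D} else {})"
  proof -
    have "f D = D"
    proof (rule set_eqI)
      fix p :: "nat \<times> nat"
      obtain a b where p: "p = (a,b)" by (cases p)
      have "(b,a) \<in> D \<longleftrightarrow> (a,b) \<in> D" unfolding D_def by auto
      then show "p \<in> f D \<longleftrightarrow> p \<in> D" unfolding f_def p mem_sw .
    qed
    have "T = D" if "T \<in> S" "f T = T" for T
    proof -
      have t: "transversal n L T" using that(1) unfolding S_def by simp
      have "(\<lambda>(i,j). (j,i)) ` T = T" using that(2) unfolding f_def .
      from fixed_transversal[OF assms(3) t this] show "T = D" unfolding D_def .
    qed
    show ?thesis
    proof (cases "transversal n L D")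
      case True
      then have "D \<in> S" unfolding S_def by simp
      have "{T\<in>S. f T = T} = {D}"
      proof (rule set_eqI)
        fix T show "T \<in> {T\<in>S. f T = T} \<longleftrightarrow> T \<in> {D}"
          using \<open>D \<in> S\<close> \<open>f D = D\<close> \<open>\<And>T. T \<in> S \<Longrightarrow> f T = T \<Longrightarrow> T = D\<close> by blast
      qed
      then show ?thesis using True by (simp only: if_True)
    next
      case False
      then have "D \<notin> S" unfolding S_def by simp
      have "{T\<in>S. f T = T} = {}"
      proof (rule set_eqI)
        fix T show "T \<in> {T\<in>S. f T = T} \<longleftrightarrow> T \<in> {}"
          using \<open>D \<notin> S\<close> \<open>\<And>T. T \<in> S \<Longrightarrow> f T = T \<Longrightarrow> T = D\<close> by blast
      qed
      then show ?thesis using False by (simp only: if_False)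
    qed
  qed
  moreover have "transversal n L D \<longleftrightarrow> odd n"
    unfolding D_def diag_transversal_iff using diag_inj_iff[OF assms] .
  ultimately have "card S mod 2 = (if odd n then 1 else 0)" by simp
  then show ?thesis unfolding S_def by (simp add: odd_iff_mod_2_eq_one)
qed

end
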